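(* Let $k$ be a field and $S=k[x_1,\dots,x_n]$. Let $I\subseteq K\subseteq S$ and $J\subseteq L\subseteq S$ be monomial ideals with $\dim_k S/I<\infty$ and $\dim_k S/J<\infty$, and let $\phi\colon K/I\to L/J$ be an $S$-module isomorphism sending monomials to monomials. Let $M=(S/I\oplus S/J)/\langle (f,-\phi(f))\mid f\in K/I\rangle$, $d=\dim_k M$, let $A_i$ be the $d\times d$ matrix of multiplication by $x_i$ on $M$ in its natural monomial basis, and let $\mathcal{A}$ be the unital $k$-algebra generated by $A_1,\dots,A_n$. Let $\lambda$ (resp. $\mu$) be the $n$-dimensional Young diagram corresponding to $I$ (resp. $J$), and let $\nu$ be the skew shape associated with $K/I$. Then \[ \dim_k\mathcal{A}\le d\iff |\nu|\le|\lambda\cap\mu|. \]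
   Context: Monomials $x^a$ are identified with $a\in\mathbb{N}^n$. The $n$-dimensional Young diagram corresponding to a monomial ideal $I$ with $\dim_k S/I<\infty$ is $\{a\in\mathbb{N}^n: x^a\notin I\}$. The skew shape associated with $K/I$ is $\{a\in\mathbb{N}^n: x^a\in K,\ x^a\notin I\}$. An isomorphism $\phi$ sends monomials to monomials if it maps the class of each monomial of $K$ not in $I$ to the class of a monomial of $L$ not in $J$. *)

theory Defs
  imports Complex_Main "HOL-Library.Function_Algebras"
begin

text \<open>A monomial x^a of S = k[x_0,...,x_(n-1)] is identified with its exponent
vector a :: nat => nat, where a i = 0 for i >= n.  A monomial ideal is identified
with the set of (exponent vectors of) monomials it contains; this is an up-closed
set of exponent vectors, and every up-closed set arises from a unique monomial ideal.\<close>

definition mono_set :: "nat \<Rightarrow> (nat \<Rightarrow> nat) set" where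
  "mono_set n = {a. \<forall>i\<ge>n. a i = 0}"

definition monomial_ideal :: "nat \<Rightarrow> (nat \<Rightarrow> nat) set \<Rightarrow> bool" where
  "monomial_ideal n E \<longleftrightarrow> E \<subseteq> mono_set n \<and>
     (\<forall>a\<in>E. \<forall>b\<in>mono_set n. a \<le> b \<longrightarrow> b \<in> E)"

text \<open>dim_k S/I < infinity: only finitely many monomials lie outside I.\<close>
definition finite_colength :: "nat \<Rightarrow> (nat \<Rightarrow> nat) set \<Rightarrow> bool" where
  "finite_colength n E \<longleftrightarrow> finite (mono_set n - E)"

definition young :: "nat \<Rightarrow> (nat \<Rightarrow> nat) set \<Rightarrow> (nat \<Rightarrow> nat) set" where
  "young n E = mono_set n - E"

definition skew :: "(nat \<Rightarrow> nat) set \<Rightarrow> (nat \<Rightarrow> nat) set \<Rightarrow> (nat \<Rightarrow> nat) set" where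
  "skew K I = K - I"

text \<open>K/I (for monomial ideals I within K, with K/I finite dimensional) has k-basis the
classes of the monomials of the skew shape K - I; an element is given by its coefficient
function, vanishing outside K - I.\<close>

definition qspace :: "(nat \<Rightarrow> nat) set \<Rightarrow> (nat \<Rightarrow> nat) set \<Rightarrow> ((nat \<Rightarrow> nat) \<Rightarrow> 'k::field) set" where
  "qspace K I = {f. \<forall>a. a \<notin> K - I \<longrightarrow> f a = 0}"

definition xmul :: "(nat \<Rightarrow> nat) set \<Rightarrow> (nat \<Rightarrow> nat) set \<Rightarrow> nat \<Rightarrow>
    ((nat \<Rightarrow> nat) \<Rightarrow> 'k::field) \<Rightarrow> ((nat \<Rightarrow> nat) \<Rightarrow> 'k)" where
  "xmul K I i f = (\<lambda>b. if b \<in> K - I \<and> 0 < b i then f (b(i := b i - 1)) else 0)"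

definition mono_vec :: "(nat \<Rightarrow> nat) \<Rightarrow> ((nat \<Rightarrow> nat) \<Rightarrow> 'k::field)" where
  "mono_vec a = (\<lambda>b. if b = a then 1 else 0)"

definition monomial_module_iso ::
  "nat \<Rightarrow> (nat \<Rightarrow> nat) set \<Rightarrow> (nat \<Rightarrow> nat) set \<Rightarrow> (nat \<Rightarrow> nat) set \<Rightarrow> (nat \<Rightarrow> nat) set \<Rightarrow>
   (((nat \<Rightarrow> nat) \<Rightarrow> 'k::field) \<Rightarrow> ((nat \<Rightarrow> nat) \<Rightarrow> 'k)) \<Rightarrow> bool" where
  "monomial_module_iso n K I L J \<phi> \<longleftrightarrow>
     (\<forall>f\<in>qspace K I. \<forall>g\<in>qspace K I. \<phi> (\<lambda>a. f a + g a) = (\<lambda>a. \<phi> f a + \<phi> g a)) \<and>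
     (\<forall>c. \<forall>f\<in>qspace K I. \<phi> (\<lambda>a. c * f a) = (\<lambda>a. c * \<phi> f a)) \<and>
     (\<forall>i<n. \<forall>f\<in>qspace K I. \<phi> (xmul K I i f) = xmul L J i (\<phi> f)) \<and>
     bij_betw \<phi> (qspace K I) (qspace L J) \<and>
     (\<forall>a\<in>K - I. \<exists>b\<in>L - J. \<phi> (mono_vec a) = mono_vec b)"

definition mono_map ::
  "(((nat \<Rightarrow> nat) \<Rightarrow> 'k::field) \<Rightarrow> ((nat \<Rightarrow> nat) \<Rightarrow> 'k)) \<Rightarrow> (nat \<Rightarrow> nat) \<Rightarrow> (nat \<Rightarrow> nat)" where
  "mono_map \<phi> a = (THE b. \<phi> (mono_vec a) = (mono_vec b :: (nat \<Rightarrow> nat) \<Rightarrow> 'k))"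

text \<open>Natural monomial basis of M = (S/I + S/J)/<(f,-phi f)>: the monomials of lambda
(from S/I, tagged Inl) together with the monomials of mu not in the skew shape of L/J
(from S/J, tagged Inr); a monomial b of L/J is identified with the monomial
phi^-1(b) of K/I.\<close>
definition Mbasis :: "nat \<Rightarrow> (nat \<Rightarrow> nat) set \<Rightarrow> (nat \<Rightarrow> nat) set \<Rightarrow> (nat \<Rightarrow> nat) set \<Rightarrow>
    ((nat \<Rightarrow> nat) + (nat \<Rightarrow> nat)) set" where
  "Mbasis n I J L = Inl ` young n I \<union> Inr ` (young n J - skew L J)"

text \<open>Image of a basis element under multiplication by x_i (None = zero).\<close>
definition Mstep ::
  "nat \<Rightarrow> (nat \<Rightarrow> nat) set \<Rightarrow> (nat \<Rightarrow> nat) set \<Rightarrow> (nat \<Rightarrow> nat) set \<Rightarrow> (nat \<Rightarrow> nat) set \<Rightarrow>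
   (((nat \<Rightarrow> nat) \<Rightarrow> 'k::field) \<Rightarrow> ((nat \<Rightarrow> nat) \<Rightarrow> 'k)) \<Rightarrow> nat \<Rightarrow>
   ((nat \<Rightarrow> nat) + (nat \<Rightarrow> nat)) \<Rightarrow> ((nat \<Rightarrow> nat) + (nat \<Rightarrow> nat)) option" where
  "Mstep n K I L J \<phi> i c = (case c of
      Inl a \<Rightarrow> (let a' = a(i := a i + 1) in
                 if a' \<in> young n I then Some (Inl a') else None)
    | Inr b \<Rightarrow> (let b' = b(i := b i + 1) in
                 if b' \<notin> young n J then None
                 else if b' \<in> skew L J then Some (Inl (inv_into (skew K I) (mono_map \<phi>) b'))
                 else Some (Inr b')))"

definition Amat ::
  "nat \<Rightarrow> (nat \<Rightarrow> nat) set \<Rightarrow> (nat \<Rightarrow> nat) set \<Rightarrow> (nat \<Rightarrow> nat) set \<Rightarrow> (nat \<Rightarrow> nat) set \<Rightarrow>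
   (((nat \<Rightarrow> nat) \<Rightarrow> 'k::field) \<Rightarrow> ((nat \<Rightarrow> nat) \<Rightarrow> 'k)) \<Rightarrow> nat \<Rightarrow>
   ((nat \<Rightarrow> nat) + (nat \<Rightarrow> nat)) \<Rightarrow> ((nat \<Rightarrow> nat) + (nat \<Rightarrow> nat)) \<Rightarrow> 'k" where
  "Amat n K I L J \<phi> i = (\<lambda>r c. if c \<in> Mbasis n I J L \<and> Mstep n K I L J \<phi> i c = Some r
                                then 1 else 0)"

definition mat_mult :: "'b set \<Rightarrow> ('b \<Rightarrow> 'b \<Rightarrow> 'k::field) \<Rightarrow> ('b \<Rightarrow> 'b \<Rightarrow> 'k) \<Rightarrow> ('b \<Rightarrow> 'b \<Rightarrow> 'k)" where
  "mat_mult B X Y = (\<lambda>r c. \<Sum>t\<in>B. X r t * Y t c)"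

definition mat_one :: "'b set \<Rightarrow> ('b \<Rightarrow> 'b \<Rightarrow> 'k::field)" where
  "mat_one B = (\<lambda>r c. if r = c \<and> r \<in> B then 1 else 0)"

definition mat_scale :: "'k::field \<Rightarrow> ('b \<Rightarrow> 'b \<Rightarrow> 'k) \<Rightarrow> ('b \<Rightarrow> 'b \<Rightarrow> 'k)" where
  "mat_scale c X = (\<lambda>r s. c * X r s)"

inductive_set gen_alg :: "'b set \<Rightarrow> ('b \<Rightarrow> 'b \<Rightarrow> 'k::field) set \<Rightarrow> ('b \<Rightarrow> 'b \<Rightarrow> 'k) set"
  for B :: "'b set" and G :: "('b \<Rightarrow> 'b \<Rightarrow> 'k::field) set" where
  one: "mat_one B \<in> gen_alg B G"
| gen: "A \<in> G \<Longrightarrow> A \<in> gen_alg B G"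
| add: "X \<in> gen_alg B G \<Longrightarrow> Y \<in> gen_alg B G \<Longrightarrow> X + Y \<in> gen_alg B G"
| scale: "X \<in> gen_alg B G \<Longrightarrow> mat_scale c X \<in> gen_alg B G"
| mult: "X \<in> gen_alg B G \<Longrightarrow> Y \<in> gen_alg B G \<Longrightarrow> mat_mult B X Y \<in> gen_alg B G"

definition mat_dim :: "('b \<Rightarrow> 'b \<Rightarrow> 'k::field) set \<Rightarrow> nat" where
  "mat_dim V = vector_space.dim (mat_scale :: 'k \<Rightarrow> ('b \<Rightarrow> 'b \<Rightarrow> 'k) \<Rightarrow> _) V"

end

theory Submission
  imports Defs
begin



definition ee :: "nat \<Rightarrow> nat \<Rightarrow> nat" where "ee i = (\<lambda>j. if j = i then 1 else 0)"

lemma upd_ee: "a(i := a i + 1) = a + ee i"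
  by (rule ext) (simp add: ee_def)

lemma mono_set_add: "a \<in> mono_set n \<Longrightarrow> b \<in> mono_set n \<Longrightarrow> a + b \<in> mono_set n"
  by (simp add: mono_set_def)

lemma ee_mono: "i < n \<Longrightarrow> ee i \<in> mono_set n"
  by (simp add: mono_set_def ee_def)

lemma zero_mono: "0 \<in> mono_set n"
  by (simp add: mono_set_def)

lemma le_add_fun: "(a::nat\<Rightarrow>nat) \<le> a + b"
  by (simp add: le_fun_def)

lemma le_add_fun2: "(a::nat\<Rightarrow>nat) \<le> b + a"
  by (simp add: le_fun_def)

lemma mi_up: "monomial_ideal n E \<Longrightarrow> a \<in> E \<Longrightarrow> b \<in> mono_set n \<Longrightarrow> a \<le> b \<Longrightarrow> b \<in> E"
  unfolding monomial_ideal_def by blast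

lemma mi_sub: "monomial_ideal n E \<Longrightarrow> E \<subseteq> mono_set n"
  unfolding monomial_ideal_def by blast

lemma mono_induct:
  assumes "m \<in> mono_set n" "P 0"
    "\<And>m i. m \<in> mono_set n \<Longrightarrow> i < n \<Longrightarrow> P m \<Longrightarrow> P (m + ee i)"
  shows "P m"
proof -
  obtain k where "k = (\<Sum>i<n. m i)" by blast
  then show ?thesis using assms(1)
  proof (induction k arbitrary: m)
    case 0
    then have "m = 0"
      by (auto simp: mono_set_def fun_eq_iff) (metis lessThan_iff not_le)
    then show ?case using assms(2) by (simp only:)
  next
    case (Suc k)
    then obtain i where i: "i < n" "0 < m i"
      by (metis gr0I lessThan_iff nat.distinct(1) sum.neutral)
    define m' where "m' = m(i := m i - 1)"
    have m': "m' \<in> mono_set n" using Suc.prems i by (auto simp: mono_set_def m'_def)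
    have "(\<Sum>j<n. m j) = m i + (\<Sum>j\<in>{..<n}-{i}. m j)"
      using i by (simp add: sum.remove)
    moreover have "(\<Sum>j<n. m' j) = m' i + (\<Sum>j\<in>{..<n}-{i}. m' j)"
      using i by (simp add: sum.remove)
    moreover have "(\<Sum>j\<in>{..<n}-{i}. m' j) = (\<Sum>j\<in>{..<n}-{i}. m j)"
      by (rule sum.cong) (auto simp: m'_def)
    ultimately have "k = (\<Sum>j<n. m' j)" using Suc.prems(1) i by (simp add: m'_def)
    then have Pm: "P m'" using Suc.IH m' by blast
    have me: "m = m' + ee i" using i by (auto simp: fun_eq_iff m'_def ee_def)
    show ?case using assms(3)[OF m' i(1) Pm] me by (simp only:)
  qed
qed

lemma dec_eq: "(0 < b i \<and> b(i := b i - 1) = a) \<longleftrightarrow> b = a + ee i"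
  by (auto simp: fun_eq_iff ee_def split: if_splits)

lemma xmul_mono: "xmul K' I' i (mono_vec a :: (nat\<Rightarrow>nat) \<Rightarrow> 'k::field)
   = (if a + ee i \<in> K' - I' then mono_vec (a + ee i) else (\<lambda>b. 0))"
proof (rule ext)
  fix b
  show "xmul K' I' i (mono_vec a :: (nat\<Rightarrow>nat) \<Rightarrow> 'k) b
   = (if a + ee i \<in> K' - I' then mono_vec (a + ee i) else (\<lambda>b. 0)) b"
    using dec_eq[of b i a] unfolding xmul_def mono_vec_def by auto
qed

lemma mono_vec_inj: "(mono_vec a :: (nat\<Rightarrow>nat) \<Rightarrow> 'k::field) = mono_vec b \<longleftrightarrow> a = b"
  unfolding mono_vec_def by (metis one_neq_zero)

lemma mono_vec_nz: "(mono_vec a :: (nat\<Rightarrow>nat) \<Rightarrow> 'k::field) \<noteq> (\<lambda>b. 0)"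
  unfolding mono_vec_def by (metis one_neq_zero)

lemma sum_fun_app: "sum f A x = (\<Sum>a\<in>A. f a x)"
  by (induction A rule: infinite_finite_induct) auto

lemma vs: "vector_space (mat_scale :: 'k::field \<Rightarrow> ('b \<Rightarrow> 'b \<Rightarrow> 'k) \<Rightarrow> _)"
  by unfold_locales (auto simp: mat_scale_def fun_eq_iff algebra_simps)

lemma mm_add_l: "mat_mult B (X + Y) Z = mat_mult B X Z + mat_mult B Y Z"
  by (auto simp: mat_mult_def fun_eq_iff algebra_simps sum.distrib)
lemma mm_add_r: "mat_mult B Z (X + Y) = mat_mult B Z X + mat_mult B Z Y"
  by (auto simp: mat_mult_def fun_eq_iff algebra_simps sum.distrib)
lemma mm_scale_l: "mat_mult B (mat_scale c X) Z = mat_scale c (mat_mult B X Z)"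
  by (auto simp: mat_mult_def mat_scale_def fun_eq_iff algebra_simps sum_distrib_left)
lemma mm_scale_r: "mat_mult B Z (mat_scale c X) = mat_scale c (mat_mult B Z X)"
  by (auto simp: mat_mult_def mat_scale_def fun_eq_iff algebra_simps sum_distrib_left)
lemma mm_zero_l: "mat_mult B 0 Z = 0"
  by (auto simp: mat_mult_def fun_eq_iff)
lemma mm_zero_r: "mat_mult B Z 0 = 0"
  by (auto simp: mat_mult_def fun_eq_iff)

lemma span_mult:
  fixes S :: "('b \<Rightarrow> 'b \<Rightarrow> 'k::field) set"
  assumes "P \<in> module.span mat_scale S" "Q \<in> module.span mat_scale S"
    "\<And>x y. x \<in> S \<Longrightarrow> y \<in> S \<Longrightarrow> mat_mult B x y \<in> module.span mat_scale S"
  shows "mat_mult B P Q \<in> module.span mat_scale S"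
proof -
  interpret V: vector_space "mat_scale :: 'k \<Rightarrow> ('b \<Rightarrow> 'b \<Rightarrow> 'k) \<Rightarrow> _" by (rule vs)
  have inner: "mat_mult B x Q \<in> V.span S" if "x \<in> S" for x
    using assms(2)
  proof (induction rule: V.span_induct_alt)
    case base then show ?case by (metis mm_zero_r V.span_zero)
  next
    case (step c y z)
    then show ?case using assms(3)[OF that] 
      by (metis mm_add_r mm_scale_r V.span_add V.span_scale)
  qed
  from assms(1) show ?thesis
  proof (induction rule: V.span_induct_alt)
    case base then show ?case by (metis mm_zero_l V.span_zero)
  next
    case (step c y z)
    then show ?case using inner
      by (metis mm_add_l mm_scale_l V.span_add V.span_scale)
  qed
qed




locale P21 =
  fixes n :: nat and I K J L :: "(nat \<Rightarrow> nat) set"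
    and \<phi> :: "((nat \<Rightarrow> nat) \<Rightarrow> 'k::field) \<Rightarrow> ((nat \<Rightarrow> nat) \<Rightarrow> 'k)"
  assumes mI: "monomial_ideal n I" and mK: "monomial_ideal n K" and IK: "I \<subseteq> K"
    and mJ: "monomial_ideal n J" and mL: "monomial_ideal n L" and JL: "J \<subseteq> L"
    and fI: "finite_colength n I" and fJ: "finite_colength n J"
    and iso: "monomial_module_iso n K I L J \<phi>"
begin

abbreviation "g \<equiv> mono_map \<phi>"
abbreviation "h \<equiv> inv_into (K - I) g"

lemma iso_add: "f \<in> qspace K I \<Longrightarrow> f' \<in> qspace K I \<Longrightarrow> \<phi> (\<lambda>a. f a + f' a) = (\<lambda>a. \<phi> f a + \<phi> f' a)"
  using iso unfolding monomial_module_iso_def by blast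
lemma iso_scale: "f \<in> qspace K I \<Longrightarrow> \<phi> (\<lambda>a. c * f a) = (\<lambda>a. c * \<phi> f a)"
  using iso unfolding monomial_module_iso_def by blast
lemma iso_xmul: "i < n \<Longrightarrow> f \<in> qspace K I \<Longrightarrow> \<phi> (xmul K I i f) = xmul L J i (\<phi> f)"
  using iso unfolding monomial_module_iso_def by blast
lemma iso_bij: "bij_betw \<phi> (qspace K I) (qspace L J)"
  using iso unfolding monomial_module_iso_def by blast
lemma iso_mono: "a \<in> K - I \<Longrightarrow> \<exists>b\<in>L - J. \<phi> (mono_vec a) = mono_vec b"
  using iso unfolding monomial_module_iso_def by blast

lemma phi0: "\<phi> (\<lambda>a. 0) = (\<lambda>a. 0)"
proof -
  have "(\<lambda>a. 0) \<in> qspace K I" by (simp add: qspace_def)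
  from iso_scale[OF this, of 0] show ?thesis by simp
qed

lemma mv_q: "a \<in> K - I \<Longrightarrow> (mono_vec a :: _ \<Rightarrow> 'k) \<in> qspace K I"
  by (auto simp: qspace_def mono_vec_def)

lemma g_prop: assumes "a \<in> K - I"
  shows "g a \<in> L - J" "\<phi> (mono_vec a) = mono_vec (g a)"
proof -
  from iso_mono[OF assms] obtain b where b: "b \<in> L - J" "\<phi> (mono_vec a) = mono_vec b" by blast
  have "g a = b" unfolding mono_map_def
    by (rule the_equality) (use b in \<open>auto simp: mono_vec_inj\<close>)
  then show "g a \<in> L - J" "\<phi> (mono_vec a) = mono_vec (g a)" using b by auto
qed

lemma K_sub: "K \<subseteq> mono_set n" using mi_sub[OF mK] .
lemma L_sub: "L \<subseteq> mono_set n" using mi_sub[OF mL] .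
lemma I_sub: "I \<subseteq> mono_set n" using mi_sub[OF mI] .
lemma J_sub: "J \<subseteq> mono_set n" using mi_sub[OF mJ] .

lemma step:
  assumes a: "a \<in> K - I" and i: "i < n"
  shows "(a + ee i \<in> I \<longleftrightarrow> g a + ee i \<in> J) \<and> (a + ee i \<notin> I \<longrightarrow> g (a + ee i) = g a + ee i)"
proof -
  have aK: "a + ee i \<in> K"
    by (rule mi_up[OF mK, of a]) (use a i K_sub mono_set_add ee_mono le_add_fun in auto)
  have gL: "g a + ee i \<in> L"
    by (rule mi_up[OF mL, of "g a"]) (use g_prop(1)[OF a] i L_sub mono_set_add ee_mono le_add_fun in auto)
  have eq: "\<phi> (xmul K I i (mono_vec a)) = xmul L J i (mono_vec (g a))"
    using iso_xmul[OF i mv_q[OF a]] g_prop(2)[OF a] by (simp only:)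
  have X1: "xmul K I i (mono_vec a :: _ \<Rightarrow> 'k) = (if a + ee i \<in> K - I then mono_vec (a + ee i) else (\<lambda>b. 0))"
    by (rule xmul_mono)
  have X2: "xmul L J i (mono_vec (g a) :: _ \<Rightarrow> 'k) = (if g a + ee i \<in> L - J then mono_vec (g a + ee i) else (\<lambda>b. 0))"
    by (rule xmul_mono)
  show ?thesis
  proof (cases "a + ee i \<in> I")
    case True
    then have "xmul L J i (mono_vec (g a) :: _ \<Rightarrow> 'k) = (\<lambda>b. 0)"
      using eq X1 phi0 by simp
    then have "g a + ee i \<notin> L - J"
      using mono_vec_nz[where 'k='k, of "g a + ee i"] X2 by (cases "g a + ee i \<in> L - J") auto
    then show ?thesis using True gL by auto
  next
    case False
    then have ak: "a + ee i \<in> K - I" using aK by auto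
    have "xmul L J i (mono_vec (g a) :: _ \<Rightarrow> 'k) = \<phi> (xmul K I i (mono_vec a))"
      using eq by (rule sym)
    also have "\<dots> = \<phi> (mono_vec (a + ee i))" using X1 ak by (simp only: if_True)
    also have "\<dots> = mono_vec (g (a + ee i))" by (rule g_prop(2)[OF ak])
    finally have "xmul L J i (mono_vec (g a) :: _ \<Rightarrow> 'k) = mono_vec (g (a + ee i))" .
    then have "g a + ee i \<in> L - J \<and> mono_vec (g a + ee i) = (mono_vec (g (a + ee i)) :: _ \<Rightarrow> 'k)"
      using mono_vec_nz[where 'k='k, of "g (a + ee i)"] X2 by (cases "g a + ee i \<in> L - J") auto
    then have c1: "g a + ee i \<in> L - J" and c2: "g (a + ee i) = g a + ee i"
      by (auto simp: mono_vec_inj)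
    show ?thesis using False c1 c2 by simp
  qed
qed

lemma G:
  assumes a: "a \<in> K - I" and m: "m \<in> mono_set n"
  shows "(a + m \<in> I \<longleftrightarrow> g a + m \<in> J) \<and> (a + m \<notin> I \<longrightarrow> g (a + m) = g a + m)"
proof (rule mono_induct[where P="\<lambda>m. (a + m \<in> I \<longleftrightarrow> g a + m \<in> J) \<and> (a + m \<notin> I \<longrightarrow> g (a + m) = g a + m)", OF m])
  show "(a + 0 \<in> I \<longleftrightarrow> g a + 0 \<in> J) \<and> (a + 0 \<notin> I \<longrightarrow> g (a + 0) = g a + 0)"
    using a g_prop(1)[OF a] by simp
next
  fix m i
  assume "m \<in> mono_set n" "i < n" "(a + m \<in> I \<longleftrightarrow> g a + m \<in> J) \<and> (a + m \<notin> I \<longrightarrow> g (a + m) = g a + m)"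
  note 2 = this
  have am: "a + m \<in> mono_set n" using a K_sub 2(1) mono_set_add[of a n m] by blast
  have gam: "g a + m \<in> mono_set n" using g_prop(1)[OF a] L_sub 2(1) mono_set_add[of "g a" n m] by blast
  have em: "ee i \<in> mono_set n" using 2(2) ee_mono by blast
  show "(a + (m + ee i) \<in> I \<longleftrightarrow> g a + (m + ee i) \<in> J) \<and> (a + (m + ee i) \<notin> I \<longrightarrow> g (a + (m + ee i)) = g a + (m + ee i))"
  proof (cases "a + m \<in> I")
    case True
    have "a + m + ee i \<in> I"
      by (rule mi_up[OF mI True mono_set_add[OF am em] le_add_fun])
    moreover have "g a + m + ee i \<in> J"
      using True 2(3) mi_up[OF mJ _ mono_set_add[OF gam em] le_add_fun] by blast
    ultimately show ?thesis by (simp add: add.assoc)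
  next
    case False
    have "a + m \<in> K"
      by (rule mi_up[OF mK _ am le_add_fun]) (use a in blast)
    then have "a + m \<in> K - I" using False by blast
    from step[OF this 2(2)] 2(3) False show ?thesis by (simp add: add.assoc)
  qed
qed

lemma finKI: "finite (K - I)"
  using fI K_sub unfolding finite_colength_def by (meson Diff_mono finite_subset order_refl)

lemma g_inj: "inj_on g (K - I)"
proof (rule inj_onI)
  fix a b assume a: "a \<in> K - I" and b: "b \<in> K - I" and e: "g a = g b"
  have "\<phi> (mono_vec a) = \<phi> (mono_vec b)" using g_prop(2)[OF a] g_prop(2)[OF b] e by simp
  then have "(mono_vec a :: _ \<Rightarrow> 'k) = mono_vec b"
    using iso_bij mv_q[OF a] mv_q[OF b] by (meson bij_betw_def inj_onD)
  then show "a = b" using mono_vec_inj by blast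
qed

lemma phi_sum:
  assumes "finite F" "F \<subseteq> K - I" "f \<in> qspace K I" "\<forall>a. a \<notin> F \<longrightarrow> f a = 0"
  shows "\<phi> f = (\<lambda>b. \<Sum>a\<in>F. f a * mono_vec (g a) b)"
  using assms
proof (induction F arbitrary: f rule: finite_induct)
  case empty
  then have "f = (\<lambda>a. 0)" by auto
  then show ?case using phi0 by simp
next
  case (insert x F)
  define f1 where "f1 = (\<lambda>a. f x * mono_vec x a)"
  define f2 where "f2 = (\<lambda>a. if a = x then 0 else f a)"
  have x: "x \<in> K - I" using insert by auto
  have f1q: "f1 \<in> qspace K I" using x by (auto simp: f1_def qspace_def mono_vec_def)
  have f2q: "f2 \<in> qspace K I" using insert.prems by (auto simp: f2_def qspace_def)
  have fe: "f = (\<lambda>a. f1 a + f2 a)" by (rule ext) (simp add: f1_def f2_def mono_vec_def)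
  have p1: "\<phi> f1 = (\<lambda>b. f x * mono_vec (g x) b)"
    unfolding f1_def using iso_scale[OF mv_q[OF x], of "f x"] g_prop(2)[OF x] by simp
  have p2: "\<phi> f2 = (\<lambda>b. \<Sum>a\<in>F. f2 a * mono_vec (g a) b)"
    using insert.IH[of f2] insert.prems f2q by (auto simp: f2_def)
  have "(\<Sum>a\<in>F. f2 a * mono_vec (g a) b) = (\<Sum>a\<in>F. f a * mono_vec (g a) b)" for b
    by (rule sum.cong) (use insert.hyps in \<open>auto simp: f2_def\<close>)
  then show ?case using insert.hyps
    by (simp add: fe iso_add[OF f1q f2q] p1 p2)
qed

lemma g_surj: "g ` (K - I) = L - J"
proof
  show "g ` (K - I) \<subseteq> L - J" using g_prop(1) by auto
next
  show "L - J \<subseteq> g ` (K - I)"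
  proof
    fix b assume b: "b \<in> L - J"
    have "(mono_vec b :: _ \<Rightarrow> 'k) \<in> qspace L J" using b by (auto simp: qspace_def mono_vec_def)
    then obtain f where f: "f \<in> qspace K I" "\<phi> f = mono_vec b"
      using iso_bij by (metis bij_betw_imp_surj_on imageE)
    have "\<phi> f = (\<lambda>b. \<Sum>a\<in>K - I. f a * mono_vec (g a) b)"
      by (rule phi_sum) (use finKI f(1) in \<open>auto simp: qspace_def\<close>)
    then have "1 = (\<Sum>a\<in>K - I. f a * mono_vec (g a) b)"
      using f(2) by (metis mono_vec_def)
    then show "b \<in> g ` (K - I)"
      by (metis (mono_tags, lifting) image_eqI mono_vec_def mult_zero_right sum.neutral zero_neq_one)
  qed
qed

lemma g_bij: "bij_betw g (K - I) (L - J)"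
  using g_inj g_surj by (simp add: bij_betw_def)

lemma h_in: "y \<in> L - J \<Longrightarrow> h y \<in> K - I"
  using g_surj by (metis inv_into_into)
lemma gh: "y \<in> L - J \<Longrightarrow> g (h y) = y"
  using g_surj by (metis f_inv_into_f)
lemma hg: "x \<in> K - I \<Longrightarrow> h (g x) = x"
  using g_inj by (metis inv_into_f_f)

end



context P21 begin

abbreviation "BB \<equiv> Mbasis n I J L"

definition sh :: "(nat \<Rightarrow> nat) \<Rightarrow> (nat \<Rightarrow> nat) + (nat \<Rightarrow> nat) \<Rightarrow> ((nat \<Rightarrow> nat) + (nat \<Rightarrow> nat)) option" where
  "sh m c = (case c of Inl a \<Rightarrow> (if a + m \<in> young n I then Some (Inl (a + m)) else None)
     | Inr b \<Rightarrow> (if b + m \<notin> young n J then None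
                 else if b + m \<in> skew L J then Some (Inl (h (b + m))) else Some (Inr (b + m))))"

lemma BB_cases: "c \<in> BB \<Longrightarrow> (\<And>a. c = Inl a \<Longrightarrow> a \<in> mono_set n \<Longrightarrow> a \<notin> I \<Longrightarrow> P)
   \<Longrightarrow> (\<And>b. c = Inr b \<Longrightarrow> b \<in> mono_set n \<Longrightarrow> b \<notin> J \<Longrightarrow> b \<notin> L \<Longrightarrow> P) \<Longrightarrow> P"
  unfolding Mbasis_def young_def skew_def by blast

lemma sh_B: assumes "c \<in> BB" "sh m c = Some t" shows "t \<in> BB"
  using assms(1)
proof (rule BB_cases)
  fix a assume "c = Inl a"
  then show ?thesis using assms(2) by (auto simp: sh_def Mbasis_def split: if_splits)
next
  fix b assume "c = Inr b"
  then show ?thesis using assms(2) h_in K_sub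
    by (auto simp: sh_def Mbasis_def young_def skew_def split: if_splits)
qed

lemma sh_zero: assumes "c \<in> BB" shows "sh 0 c = Some c"
  using assms(1)
proof (rule BB_cases)
  fix a assume "c = Inl a" "a \<in> mono_set n" "a \<notin> I"
  then show ?thesis by (simp add: sh_def young_def)
next
  fix b assume "c = Inr b" "b \<in> mono_set n" "b \<notin> J" "b \<notin> L"
  then show ?thesis by (simp add: sh_def young_def skew_def)
qed

lemma sh_none: assumes "c \<in> BB" "m \<in> mono_set n" "m \<in> I" "m \<in> J" shows "sh m c = None"
  using assms(1)
proof (rule BB_cases)
  fix a assume a: "c = Inl a" "a \<in> mono_set n" "a \<notin> I"
  have "a + m \<in> I" by (rule mi_up[OF mI assms(3) mono_set_add[OF a(2) assms(2)] le_add_fun2])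
  then show ?thesis using a by (simp add: sh_def young_def)
next
  fix b assume b: "c = Inr b" "b \<in> mono_set n" "b \<notin> J" "b \<notin> L"
  have "b + m \<in> J" by (rule mi_up[OF mJ assms(4) mono_set_add[OF b(2) assms(2)] le_add_fun2])
  then show ?thesis using b by (simp add: sh_def young_def)
qed

lemma Mstep_sh: assumes "c \<in> BB" "i < n" shows "Mstep n K I L J \<phi> i c = sh (ee i) c"
  unfolding Mstep_def sh_def Let_def upd_ee skew_def by (cases c) auto

lemma sh_comp:
  assumes c: "c \<in> BB" and m: "m \<in> mono_set n" and m': "m' \<in> mono_set n"
  shows "sh (m' + m) c = (case sh m' c of None \<Rightarrow> None | Some t \<Rightarrow> sh m t)"
  using c
proof (rule BB_cases)
  fix a assume a: "c = Inl a" "a \<in> mono_set n" "a \<notin> I"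
  have am': "a + m' \<in> mono_set n" using mono_set_add[OF a(2) m'] .
  show ?thesis
  proof (cases "a + m' \<in> young n I")
    case True
    then show ?thesis using a by (simp add: sh_def add.assoc)
  next
    case False
    then have "a + m' \<in> I" using am' by (simp add: young_def)
    then have "a + m' + m \<in> I" by (rule mi_up[OF mI _ mono_set_add[OF am' m] le_add_fun])
    then show ?thesis using a False by (simp add: sh_def add.assoc young_def)
  qed
next
  fix b assume b: "c = Inr b" "b \<in> mono_set n" "b \<notin> J" "b \<notin> L"
  define y where "y = b + m'"
  have y: "y \<in> mono_set n" unfolding y_def using mono_set_add[OF b(2) m'] .
  have ym: "y + m \<in> mono_set n" using mono_set_add[OF y m] .
  have e1: "b + (m' + m) = y + m" by (simp add: y_def add.assoc)
  show ?thesis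
  proof (cases "y \<in> young n J")
    case False
    then have "y \<in> J" using y by (simp add: young_def)
    then have "y + m \<in> J" by (rule mi_up[OF mJ _ ym le_add_fun])
    then show ?thesis using b False by (simp add: sh_def e1 young_def flip: y_def)
  next
    case yJ: True
    show ?thesis
    proof (cases "y \<in> skew L J")
      case False
      then show ?thesis using b yJ by (simp add: sh_def e1 flip: y_def)
    next
      case yL: True
      then have yLJ: "y \<in> L - J" by (simp add: skew_def)
      define x where "x = h y"
      have x: "x \<in> K - I" unfolding x_def by (rule h_in[OF yLJ])
      have gx: "g x = y" unfolding x_def by (rule gh[OF yLJ])
      have xm: "x + m \<in> mono_set n" using mono_set_add[of x n m] x K_sub m by blast
      have Gx: "(x + m \<in> I \<longleftrightarrow> y + m \<in> J) \<and> (x + m \<notin> I \<longrightarrow> g (x + m) = y + m)"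
        using G[OF x m] gx by simp
      have yml: "y + m \<in> L" using yLJ by (intro mi_up[OF mL _ ym le_add_fun]) blast
      have rhs: "(case sh m' c of None \<Rightarrow> None | Some t \<Rightarrow> sh m t) = sh m (Inl x)"
        using b yJ yL by (simp add: sh_def x_def flip: y_def)
      show ?thesis
      proof (cases "y + m \<in> J")
        case True
        then show ?thesis unfolding rhs using b Gx by (simp add: sh_def e1 young_def)
      next
        case False
        have xK: "x + m \<in> K" using x by (intro mi_up[OF mK _ xm le_add_fun]) blast
        have "h (y + m) = x + m" using hg[of "x + m"] Gx False xK by simp
        then show ?thesis unfolding rhs using b Gx False xm yml ym
          by (simp add: sh_def e1 young_def skew_def)
      qed
    qed
  qed
qed

end



context P21 begin

definition Xm :: "(nat \<Rightarrow> nat) \<Rightarrow> (nat \<Rightarrow> nat) + (nat \<Rightarrow> nat) \<Rightarrow> (nat \<Rightarrow> nat) + (nat \<Rightarrow> nat) \<Rightarrow> 'k" where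
  "Xm m = (\<lambda>r c. if c \<in> BB \<and> sh m c = Some r then 1 else 0)"

lemma finB: "finite BB"
proof -
  have "finite (young n I)" "finite (young n J)"
    using fI fJ by (auto simp: finite_colength_def young_def)
  then show ?thesis unfolding Mbasis_def by auto
qed

lemma Xm_one: "Xm 0 = mat_one BB"
  by (auto simp: Xm_def mat_one_def fun_eq_iff sh_zero)

lemma Xm_gen: "i < n \<Longrightarrow> Xm (ee i) = Amat n K I L J \<phi> i"
  by (auto simp: Xm_def Amat_def fun_eq_iff Mstep_sh)

lemma Xm_zero: "m \<in> mono_set n \<Longrightarrow> m \<in> I \<Longrightarrow> m \<in> J \<Longrightarrow> Xm m = 0"
  by (auto simp: Xm_def fun_eq_iff sh_none)

lemma Xm_mult: assumes m: "m \<in> mono_set n" and m': "m' \<in> mono_set n"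
  shows "mat_mult BB (Xm m) (Xm m') = Xm (m' + m)"
proof (rule ext, rule ext)
  fix r c
  show "mat_mult BB (Xm m) (Xm m') r c = Xm (m' + m) r c"
  proof (cases "c \<in> BB")
    case False
    then show ?thesis by (simp add: mat_mult_def Xm_def)
  next
    case cB: True
    show ?thesis
    proof (cases "sh m' c")
      case None
      then have "sh (m' + m) c = None" using sh_comp[OF cB m m'] by simp
      then show ?thesis using None by (simp add: mat_mult_def Xm_def)
    next
      case (Some t0)
      have t0: "t0 \<in> BB" by (rule sh_B[OF cB Some])
      have "mat_mult BB (Xm m) (Xm m') r c = (\<Sum>t\<in>BB. if t = t0 then Xm m r t else 0)"
        unfolding mat_mult_def by (rule sum.cong) (auto simp: Xm_def cB Some)
      also have "\<dots> = Xm m r t0" using t0 finB by (simp add: sum.delta)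
      also have "\<dots> = Xm (m' + m) r c"
        using sh_comp[OF cB m m'] Some t0 cB by (simp add: Xm_def)
      finally show ?thesis .
    qed
  qed
qed

abbreviation "GG \<equiv> {Amat n K I L J \<phi> i | i. i < n}"

lemma Xm_gen_alg: assumes "m \<in> mono_set n" shows "Xm m \<in> gen_alg BB GG"
proof (rule mono_induct[where P="\<lambda>m. Xm m \<in> gen_alg BB GG", OF assms])
  show "Xm 0 \<in> gen_alg BB GG" unfolding Xm_one by (rule gen_alg.one)
next
  fix m i assume h: "m \<in> mono_set n" "i < n" "Xm m \<in> gen_alg BB GG"
  have "Xm (ee i) \<in> gen_alg BB GG" using h(2) by (auto simp: Xm_gen intro!: gen_alg.gen)
  from gen_alg.mult[OF this h(3)] show "Xm (m + ee i) \<in> gen_alg BB GG"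
    using Xm_mult[OF ee_mono[OF h(2)] h(1)] by simp
qed

abbreviation "UU \<equiv> young n I \<union> young n J"

lemma UU_sub: "UU \<subseteq> mono_set n" by (auto simp: young_def)

lemma gen_sub_span: "gen_alg BB GG \<subseteq> module.span mat_scale (Xm ` UU)"
proof -
  interpret V: vector_space "mat_scale :: 'k \<Rightarrow> ((nat \<Rightarrow> nat) + (nat \<Rightarrow> nat) \<Rightarrow> (nat \<Rightarrow> nat) + (nat \<Rightarrow> nat) \<Rightarrow> 'k) \<Rightarrow> _" by (rule vs)
  have Xs: "Xm m \<in> V.span (Xm ` UU)" if "m \<in> mono_set n" for m
  proof (cases "m \<in> UU")
    case True then show ?thesis by (intro V.span_base) blast
  next
    case False
    then have "Xm m = 0" using that by (intro Xm_zero) (auto simp: young_def)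
    then show ?thesis using V.span_zero by simp
  qed
  show ?thesis
  proof
    fix x assume "x \<in> gen_alg BB GG"
    then show "x \<in> V.span (Xm ` UU)"
    proof (induction rule: gen_alg.induct)
      case one
      then show ?case using Xs[OF zero_mono] Xm_one by simp
    next
      case (gen A)
      then show ?case using Xs[OF ee_mono] Xm_gen by auto
    next
      case (add X Y)
      then show ?case by (intro V.span_add) auto
    next
      case (scale X c)
      then show ?case by (intro V.span_scale) auto
    next
      case (mult X Y)
      show ?case
      proof (rule span_mult[OF mult.IH])
        fix x y assume "x \<in> Xm ` UU" "y \<in> Xm ` UU"
        then obtain m m' where "m \<in> UU" "m' \<in> UU" "x = Xm m" "y = Xm m'" by blast
        then show "mat_mult BB x y \<in> V.span (Xm ` UU)"
          using Xm_mult Xs mono_set_add UU_sub by (metis subsetD)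
      qed
    qed
  qed
qed

end



context P21 begin

lemma add_cancel_fun: "(x::nat\<Rightarrow>nat) + a = x + b \<Longrightarrow> a = b"
  by (simp add: fun_eq_iff)

lemma sep: assumes m0: "m0 \<in> UU"
  shows "\<exists>r c. \<forall>m\<in>UU. Xm m r c = (if m = m0 then 1 else 0)"
proof (cases "m0 \<in> young n I")
  case True
  have z: "0 \<notin> I"
  proof
    assume "0 \<in> I"
    then have "m0 \<in> I" by (rule mi_up[OF mI]) (use True in \<open>auto simp: young_def le_fun_def\<close>)
    then show False using True by (simp add: young_def)
  qed
  have cB: "Inl 0 \<in> BB" using z by (simp add: Mbasis_def young_def zero_mono)
  show ?thesis
    by (rule exI[of _ "Inl m0"], rule exI[of _ "Inl 0"]) (use True cB in \<open>auto simp: Xm_def sh_def\<close>)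
next
  case False
  then have m0J: "m0 \<in> young n J" using m0 by blast
  have z: "0 \<notin> J"
  proof
    assume "0 \<in> J"
    then have "m0 \<in> J" by (rule mi_up[OF mJ]) (use m0J in \<open>auto simp: young_def le_fun_def\<close>)
    then show False using m0J by (simp add: young_def)
  qed
  show ?thesis
  proof (cases "0 \<in> L")
    case True
    then have zLJ: "0 \<in> L - J" using z by blast
    define x0 where "x0 = h 0"
    have x0: "x0 \<in> K - I" unfolding x0_def by (rule h_in[OF zLJ])
    have gx0: "g x0 = 0" unfolding x0_def by (rule gh[OF zLJ])
    have cB: "Inl x0 \<in> BB" using x0 K_sub by (auto simp: Mbasis_def young_def)
    have shc: "sh m (Inl x0) = (if m \<in> J then None else Some (Inl (x0 + m)))" if "m \<in> UU" for m
    proof -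
      have mm: "m \<in> mono_set n" using that UU_sub by blast
      have "x0 + m \<in> mono_set n" using mono_set_add[of x0 n m] x0 K_sub mm by blast
      then show ?thesis using G[OF x0 mm] gx0 by (simp add: sh_def young_def)
    qed
    show ?thesis
    proof (rule exI[of _ "Inl (x0 + m0)"], rule exI[of _ "Inl x0"], intro ballI)
      fix m assume m: "m \<in> UU"
      show "Xm m (Inl (x0 + m0)) (Inl x0) = (if m = m0 then 1 else 0)"
      proof -
        have m0nJ: "m0 \<notin> J" using m0J by (simp add: young_def)
        have "sh m (Inl x0) = Some (Inl (x0 + m0)) \<longleftrightarrow> m = m0"
        proof
          assume "sh m (Inl x0) = Some (Inl (x0 + m0))"
          then have "x0 + m = x0 + m0" unfolding shc[OF m] by (simp split: if_splits)
          then show "m = m0" by (rule add_cancel_fun)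
        next
          assume "m = m0"
          then show "sh m (Inl x0) = Some (Inl (x0 + m0))" unfolding shc[OF m] using m0nJ by simp
        qed
        then show ?thesis using cB by (simp add: Xm_def)
      qed
    qed
  next
    case False
    have cB: "Inr 0 \<in> BB" using z False by (simp add: Mbasis_def young_def skew_def zero_mono)
    define q where "q m = (if m \<in> skew L J then Inl (h m) else Inr m)" for m :: "nat \<Rightarrow> nat"
    have shc: "sh m (Inr 0) = (if m \<notin> young n J then None else Some (q m))" for m
      by (simp add: sh_def q_def)
    have qinj: "m = m0" if "q m = q m0" for m
    proof (cases "m \<in> skew L J")
      case a1: True
      show ?thesis
      proof (cases "m0 \<in> skew L J")
        case a2: True
        then have "h m = h m0" using a1 that by (simp add: q_def)
        then have "g (h m) = g (h m0)" by simp
        then show ?thesis using gh[of m] gh[of m0] a1 a2 by (simp add: skew_def)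
      next
        case False
        then show ?thesis using a1 that by (simp add: q_def)
      qed
    next
      case a1: False
      show ?thesis
      proof (cases "m0 \<in> skew L J")
        case True
        then show ?thesis using a1 that by (simp add: q_def)
      next
        case False
        then show ?thesis using a1 that by (simp add: q_def)
      qed
    qed
    show ?thesis
    proof (rule exI[of _ "q m0"], rule exI[of _ "Inr 0"], intro ballI)
      fix m assume m: "m \<in> UU"
      have "sh m (Inr 0) = Some (q m0) \<longleftrightarrow> m = m0"
      proof
        assume e: "sh m (Inr 0) = Some (q m0)"
        then have "q m = q m0" unfolding shc by (simp split: if_splits)
        then show "m = m0" by (rule qinj)
      next
        assume "m = m0"
        then show "sh m (Inr 0) = Some (q m0)" unfolding shc using m0J by simp
      qed
      then show "Xm m (q m0) (Inr 0) = (if m = m0 then 1 else 0)"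
        using cB by (simp add: Xm_def)
    qed
  qed
qed

lemma Xm_inj: "inj_on Xm UU"
proof (rule inj_onI)
  fix m m' assume m: "m \<in> UU" and m': "m' \<in> UU" and e: "Xm m = Xm m'"
  obtain r c where rc: "\<forall>x\<in>UU. Xm x r c = (if x = m then 1 else 0)" using sep[OF m] by blast
  have "Xm m r c = 1" using rc m by simp
  then have "Xm m' r c = 1" using e by simp
  then show "m = m'" using rc m' by (auto split: if_splits)
qed

lemma finUU: "finite UU"
  using fI fJ by (auto simp: finite_colength_def young_def)

lemma dim_eq: "mat_dim (gen_alg BB GG) = card UU"
proof -
  interpret V: vector_space "mat_scale :: 'k \<Rightarrow> ((nat \<Rightarrow> nat) + (nat \<Rightarrow> nat) \<Rightarrow> (nat \<Rightarrow> nat) + (nat \<Rightarrow> nat) \<Rightarrow> 'k) \<Rightarrow> _" by (rule vs)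
  have cardX: "card (Xm ` UU) = card UU" by (rule card_image[OF Xm_inj])
  have sub: "Xm ` UU \<subseteq> gen_alg BB GG" using Xm_gen_alg UU_sub by blast
  have ind: "V.independent (Xm ` UU)"
  proof
    assume "V.dependent (Xm ` UU)"
    moreover have fS: "finite (Xm ` UU)" using finUU by blast
    ultimately obtain u where u: "\<exists>v\<in>Xm ` UU. u v \<noteq> 0" "(\<Sum>v\<in>Xm ` UU. mat_scale (u v) v) = 0"
      unfolding V.dependent_finite[OF fS] by blast
    then obtain m0 where m0: "m0 \<in> UU" "u (Xm m0) \<noteq> 0" by blast
    obtain r c where rc: "\<forall>x\<in>UU. Xm x r c = (if x = m0 then 1 else 0)" using sep[OF m0(1)] by blast
    have "0 = (\<Sum>v\<in>Xm ` UU. mat_scale (u v) v) r c" by (simp only: u(2) zero_fun_apply)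
    also have "\<dots> = (\<Sum>v\<in>Xm ` UU. u v * v r c)" by (simp only: sum_fun_app mat_scale_def)
    also have "\<dots> = (\<Sum>m\<in>UU. u (Xm m) * Xm m r c)" by (rule sum.reindex[OF Xm_inj, unfolded comp_def])
    also have "\<dots> = (\<Sum>m\<in>UU. if m = m0 then u (Xm m) else 0)" by (rule sum.cong) (use rc in auto)
    also have "\<dots> = u (Xm m0)" using finUU m0(1) by (simp add: sum.delta)
    finally show False using m0(2) by simp
  qed
  have "card (Xm ` UU) = V.dim (gen_alg BB GG)"
    by (rule V.basis_card_eq_dim[OF sub gen_sub_span ind])
  then show ?thesis unfolding mat_dim_def using cardX by simp
qed

lemma card_BB: "card BB = card (young n I) + card (young n J) - card (skew K I)"
proof -
  have fy: "finite (young n I)" "finite (young n J)"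
    using fI fJ by (auto simp: finite_colength_def young_def)
  have sub: "skew L J \<subseteq> young n J" using L_sub by (auto simp: skew_def young_def)
  have cs: "card (skew L J) = card (skew K I)"
    using bij_betw_same_card[OF g_bij] by (simp add: skew_def)
  have "card BB = card (Inl ` young n I :: ((nat\<Rightarrow>nat) + (nat\<Rightarrow>nat)) set) + card (Inr ` (young n J - skew L J) :: ((nat\<Rightarrow>nat) + (nat\<Rightarrow>nat)) set)"
    unfolding Mbasis_def by (intro card_Un_disjoint) (use fy in auto)
  also have "\<dots> = card (young n I) + card (young n J - skew L J)"
    by (simp add: card_image)
  also have "card (young n J - skew L J) = card (young n J) - card (skew L J)"
    by (rule card_Diff_subset[OF finite_subset[OF sub fy(2)] sub])
  finally show ?thesis using cs card_mono[OF fy(2) sub] by simp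
qed

lemma final: "mat_dim (gen_alg BB GG) \<le> card BB \<longleftrightarrow> card (skew K I) \<le> card (young n I \<inter> young n J)"
proof -
  have fy: "finite (young n I)" "finite (young n J)"
    using fI fJ by (auto simp: finite_colength_def young_def)
  have sub: "skew L J \<subseteq> young n J" using L_sub by (auto simp: skew_def young_def)
  have cs: "card (skew L J) = card (skew K I)"
    using bij_betw_same_card[OF g_bij] by (simp add: skew_def)
  have c1: "card (skew K I) \<le> card (young n J)" using cs card_mono[OF fy(2) sub] by simp
  have c2: "card (young n I) + card (young n J) = card UU + card (young n I \<inter> young n J)"
    using card_Un_Int[OF fy] .
  have c3: "card (young n I \<inter> young n J) \<le> card (young n J)" using card_mono[OF fy(2)] by blast
  show ?thesis unfolding dim_eq card_BB using c1 c2 c3 by linarith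
qed

end

theorem proposition2p1:
  fixes n :: nat
    and I K J L :: "(nat \<Rightarrow> nat) set"
    and \<phi> :: "((nat \<Rightarrow> nat) \<Rightarrow> 'k::field) \<Rightarrow> ((nat \<Rightarrow> nat) \<Rightarrow> 'k)"
  assumes "monomial_ideal n I" and "monomial_ideal n K" and "I \<subseteq> K"
    and "monomial_ideal n J" and "monomial_ideal n L" and "J \<subseteq> L"
    and "finite_colength n I" and "finite_colength n J"
    and "monomial_module_iso n K I L J \<phi>"
  shows "mat_dim (gen_alg (Mbasis n I J L) {Amat n K I L J \<phi> i | i. i < n})
           \<le> card (Mbasis n I J L)
         \<longleftrightarrow> card (skew K I) \<le> card (young n I \<inter> young n J)"
proof -
  interpret P21 n I K J L \<phi> using assms by unfold_locales
  show ?thesis by (rule final)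
qed


end
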